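(* Let $\Omega\subset\mathbb{R}^N$ be a bounded domain with smooth boundary, $0<s<1$, $M$ a Young function satisfying $1<m_0:=\inf_{t>0}\frac{tm(t)}{M(t)}\le m^0:=\sup_{t>0}\frac{tm(t)}{M(t)}<\infty$, (S) $t\mapsto M(\sqrt t)$ convex on $[0,\infty)$, and (Q) $\lim_{t\to+\infty}|t|^q/M(t)=0$, where $1<q<\min(p^*,m_0)$, $p^*=Np/(N-p)$ for a fixed $1<p<N$. Let $g:\Omega\times\mathbb{R}\to\mathbb{R}$ be Carathéodory with $G(x,t)=\int_0^t g(x,\tau)d\tau$ satisfying (A) $|g(x,t)|\le C_0|t|^{q-1}$ and (B) $C_1|t|^q\le G(x,t)\le C_2|t|^q$ for all $x\in\Omega,t\in\mathbb{R}$, with $C_0,C_1,C_2>0$. Then for each $\lambda>0$ the functional $$I_\lambda(u)=\int_{\mathbb{R}^N}\int_{\mathbb{R}^N}M\Big(\frac{u(x)-u(y)}{|x-y|^s}\Big)\frac{dx\,dy}{|x-y|^N}-\lambda\int_\Omega G(x,u)\,dx$$ is coercive on $\tilde W^{s,M}_0(\Omega)$, i.e. $I_\lambda(u)\to\infty$ as $\|u\|\to\infty$.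
   Context: A Young function is $M(t)=\int_0^{|t|}m(\tau)\,d\tau$, where $m:\mathbb{R}\to\mathbb{R}$ is an increasing homeomorphism of $\mathbb{R}$ onto $\mathbb{R}$ with $m(0)=0$, $m(t)>0$ for $t>0$, $m(t)\to\infty$ as $t\to\infty$. $L^M$ is the Orlicz space with Luxemburg norm $\|u\|_{(M)}=\inf\{\lambda>0:\int M(u/\lambda)\le1\}$. $W^{s,M}(\mathbb{R}^N)$ is the set of $u\in L^M(\mathbb{R}^N)$ with $\int\int M\big(\frac{u(x)-u(y)}{|x-y|^s}\big)\frac{dxdy}{|x-y|^N}<\infty$, with seminorm $[u]_{(s,M)}=\inf\{\lambda>0:\int\int M\big(\frac{u(x)-u(y)}{\lambda|x-y|^s}\big)\frac{dxdy}{|x-y|^N}\le1\}$ and norm $\|u\|_{(s,M)}=\|u\|_{(M)}+[u]_{(s,M)}$. $\tilde W^{s,M}_0(\Omega)$ is the space of functions in the closure $W^{s,M}_0(\Omega)$ of $C_c^\infty(\Omega)$ in $\|\cdot\|_{(s,M)}$ which vanish a.e. in $\mathbb{R}^N\setminus\Omega$, normed by $\|u\|=[u]_{(s,M)}$. *)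

theory Defs
  imports "HOL-Analysis.Analysis"
begin

definition young_gen :: "(real \<Rightarrow> real) \<Rightarrow> bool" where
  "young_gen m \<longleftrightarrow> strict_mono m \<and> continuous_on UNIV m \<and> surj m \<and> m 0 = 0
      \<and> (\<forall>t>0. m t > 0) \<and> filterlim m at_top at_top"

definition youngM :: "(real \<Rightarrow> real) \<Rightarrow> real \<Rightarrow> real" where
  "youngM m t = integral {0..\<bar>t\<bar>} m"

fun Ck_on :: "nat \<Rightarrow> ('a::euclidean_space \<Rightarrow> real) \<Rightarrow> 'a set \<Rightarrow> bool" where
  "Ck_on 0 f S = continuous_on S f"
| "Ck_on (Suc k) f S = ((\<forall>x\<in>S. f differentiable (at x)) \<and>
      (\<forall>i\<in>Basis. Ck_on k (\<lambda>x. frechet_derivative f (at x) i) S))"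

definition smooth_on :: "('a::euclidean_space \<Rightarrow> real) \<Rightarrow> 'a set \<Rightarrow> bool" where
  "smooth_on f S \<longleftrightarrow> (\<forall>k. Ck_on k f S)"

definition smooth_bounded_domain :: "'a::euclidean_space set \<Rightarrow> bool" where
  "smooth_bounded_domain \<Omega> \<longleftrightarrow> open \<Omega> \<and> connected \<Omega> \<and> \<Omega> \<noteq> {} \<and> bounded \<Omega> \<and>
     (\<forall>z\<in>frontier \<Omega>. \<exists>r>0. \<exists>\<psi>. smooth_on \<psi> (ball z r) \<and> \<psi> z = 0 \<and>
         frechet_derivative \<psi> (at z) \<noteq> (\<lambda>_. 0) \<and>
         \<Omega> \<inter> ball z r = {x\<in>ball z r. \<psi> x < 0})"

definition Cc_inf :: "'a::euclidean_space set \<Rightarrow> ('a \<Rightarrow> real) set" where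
  "Cc_inf \<Omega> = {\<phi>. smooth_on \<phi> UNIV \<and> compact (closure {x. \<phi> x \<noteq> 0})
                     \<and> closure {x. \<phi> x \<noteq> 0} \<subseteq> \<Omega>}"

definition modM :: "(real \<Rightarrow> real) \<Rightarrow> ('a::euclidean_space \<Rightarrow> real) \<Rightarrow> ennreal" where
  "modM M u = (\<integral>\<^sup>+ x. ennreal (M (u x)) \<partial>lebesgue)"

definition fmodM :: "real \<Rightarrow> (real \<Rightarrow> real) \<Rightarrow> ('a::euclidean_space \<Rightarrow> real) \<Rightarrow> ennreal" where
  "fmodM s M u = (\<integral>\<^sup>+ x. \<integral>\<^sup>+ y.
      ennreal (M ((u x - u y) / (dist x y powr s)) / (dist x y powr real DIM('a))) \<partial>lebesgue \<partial>lebesgue)"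

definition orlicz_space :: "(real \<Rightarrow> real) \<Rightarrow> ('a::euclidean_space \<Rightarrow> real) set" where
  "orlicz_space M = {u. u \<in> borel_measurable lebesgue \<and> (\<exists>l>0. modM M (\<lambda>x. u x / l) < \<infinity>)}"

definition lux_norm :: "(real \<Rightarrow> real) \<Rightarrow> ('a::euclidean_space \<Rightarrow> real) \<Rightarrow> real" where
  "lux_norm M u = Inf {l. l > 0 \<and> modM M (\<lambda>x. u x / l) \<le> 1}"

definition frac_seminorm :: "real \<Rightarrow> (real \<Rightarrow> real) \<Rightarrow> ('a::euclidean_space \<Rightarrow> real) \<Rightarrow> real" where
  "frac_seminorm s M u = Inf {l. l > 0 \<and> fmodM s M (\<lambda>x. u x / l) \<le> 1}"

definition frac_norm :: "real \<Rightarrow> (real \<Rightarrow> real) \<Rightarrow> ('a::euclidean_space \<Rightarrow> real) \<Rightarrow> real" where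
  "frac_norm s M u = lux_norm M u + frac_seminorm s M u"

definition Wspace :: "real \<Rightarrow> (real \<Rightarrow> real) \<Rightarrow> ('a::euclidean_space \<Rightarrow> real) set" where
  "Wspace s M = {u. u \<in> orlicz_space M \<and> fmodM s M u < \<infinity>}"

definition W0space :: "real \<Rightarrow> (real \<Rightarrow> real) \<Rightarrow> 'a::euclidean_space set \<Rightarrow> ('a \<Rightarrow> real) set" where
  "W0space s M \<Omega> = {u. u \<in> Wspace s M \<and>
      (\<forall>e>0. \<exists>\<phi>\<in>Cc_inf \<Omega>. frac_norm s M (\<lambda>x. u x - \<phi> x) < e)}"

definition W0tilde :: "real \<Rightarrow> (real \<Rightarrow> real) \<Rightarrow> 'a::euclidean_space set \<Rightarrow> ('a \<Rightarrow> real) set" where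
  "W0tilde s M \<Omega> = {u. u \<in> W0space s M \<Omega> \<and> (AE x in lebesgue. x \<notin> \<Omega> \<longrightarrow> u x = 0)}"

definition primitive :: "('a \<Rightarrow> real \<Rightarrow> real) \<Rightarrow> 'a \<Rightarrow> real \<Rightarrow> real" where
  "primitive g x t = (if 0 \<le> t then integral {0..t} (g x) else - integral {t..0} (g x))"

definition I_functional :: "real \<Rightarrow> (real \<Rightarrow> real) \<Rightarrow> 'a::euclidean_space set \<Rightarrow>
     ('a \<Rightarrow> real \<Rightarrow> real) \<Rightarrow> real \<Rightarrow> ('a \<Rightarrow> real) \<Rightarrow> real" where
  "I_functional s M \<Omega> g lam u =
     enn2real (fmodM s M u) - lam * (LINT x:\<Omega>|lebesgue. primitive g x (u x))"

end

theory Submission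
  imports Defs
begin


lemma young_m_nonneg: assumes "young_gen m" "0 \<le> t" shows "0 \<le> m t"
  using assms strict_mono_less_eq[of m 0 t] by (simp add: young_gen_def)

lemma young_cont: assumes "young_gen m" shows "continuous_on S m"
  using assms continuous_on_subset[of UNIV m S] by (simp add: young_gen_def)

lemma youngM_nonneg: assumes "young_gen m" shows "0 \<le> youngM m t"
  unfolding youngM_def
proof (rule integral_nonneg)
  show "m integrable_on {0..\<bar>t\<bar>}"
    by (rule integrable_continuous_real) (rule young_cont[OF assms])
  show "\<And>x. x \<in> {0..\<bar>t\<bar>} \<Longrightarrow> 0 \<le> m x"
    using young_m_nonneg[OF assms] by simp
qed

lemma youngM_abs: "youngM m \<bar>t\<bar> = youngM m t"
  unfolding youngM_def by simp

lemma youngM_0: "youngM m 0 = 0"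
  unfolding youngM_def by simp

lemma youngM_scale:
  assumes "young_gen m" and S: "convex_on {0..} (\<lambda>t. youngM m (sqrt t))"
    and "0 \<le> a" "a \<le> 1"
  shows "youngM m (a * t) \<le> a * youngM m t"
proof -
  have "youngM m (sqrt ((1 - a^2) * 0 + a^2 * t^2)) \<le> (1 - a^2) * youngM m (sqrt 0) + a^2 * youngM m (sqrt (t^2))"
    using convex_onD[OF S, of "a^2" 0 "t^2"] assms by (simp add: power_le_one)
  moreover have "sqrt ((1 - a^2) * 0 + a^2 * t^2) = \<bar>a * t\<bar>" by (simp add: real_sqrt_mult abs_mult)
  moreover have "sqrt (t^2) = \<bar>t\<bar>" by simp
  ultimately have "youngM m (a * t) \<le> a^2 * youngM m t"
    by (simp add: youngM_0 youngM_abs)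
  also have "\<dots> \<le> a * youngM m t"
    using assms youngM_nonneg[OF assms(1), of t]
    by (simp add: mult_right_le_one_le power2_eq_square mult_left_le_one_le mult.assoc)
  finally show ?thesis .
qed

lemma youngM_mono:
  assumes "young_gen m" and S: "convex_on {0..} (\<lambda>t. youngM m (sqrt t))"
    and "\<bar>a\<bar> \<le> \<bar>b\<bar>"
  shows "youngM m a \<le> youngM m b"
proof (cases "b = 0")
  case True then show ?thesis using assms by simp
next
  case False
  have "youngM m a = youngM m ((\<bar>a\<bar>/\<bar>b\<bar>) * \<bar>b\<bar>)" using False by (simp add: youngM_abs)
  also have "\<dots> \<le> (\<bar>a\<bar>/\<bar>b\<bar>) * youngM m \<bar>b\<bar>"
    by (rule youngM_scale[OF assms(1,2)]) (use assms False in auto)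
  also have "\<dots> \<le> youngM m b"
  proof -
    have h: "\<bar>a\<bar>/\<bar>b\<bar> \<le> 1" using assms False by simp
    have "(\<bar>a\<bar>/\<bar>b\<bar>) * youngM m b \<le> youngM m b"
      by (rule mult_left_le_one_le) (use h youngM_nonneg[OF assms(1), of b] in auto)
    then show ?thesis by (simp only: youngM_abs)
  qed
  finally show ?thesis .
qed

lemma youngM_pos:
  assumes "young_gen m" "t \<noteq> 0"
  shows "0 < youngM m t"
proof -
  define T where "T = \<bar>t\<bar>"
  have tp: "T > 0" using assms by (simp add: T_def)
  have int: "m integrable_on {0..T}"
    by (intro integrable_continuous_real young_cont[OF assms(1)])
  have "integral {0..T} m = integral {0..T/2} m + integral {T/2..T} m"
    using Henstock_Kurzweil_Integration.integral_combine[where f=m and a=0 and c="T/2" and b=T] int tp by simp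
  moreover have "0 \<le> integral {0..T/2} m"
  proof (rule integral_nonneg)
    show "m integrable_on {0..T/2}"
      by (intro integrable_continuous_real young_cont[OF assms(1)])
    show "\<And>x. x \<in> {0..T/2} \<Longrightarrow> 0 \<le> m x"
      using young_m_nonneg[OF assms(1)] by simp
  qed
  moreover have "integral {T/2..T} (\<lambda>x. m (T/2)) \<le> integral {T/2..T} m"
  proof (rule integral_le)
    show "m integrable_on {T/2..T}"
      by (intro integrable_continuous_real young_cont[OF assms(1)])
    show "\<And>x. x \<in> {T/2..T} \<Longrightarrow> m (T/2) \<le> m x"
      using assms(1) strict_mono_less_eq[of m "T/2"] by (simp add: young_gen_def)
  qed auto
  moreover have "integral {T/2..T} (\<lambda>x. m (T/2)) = T/2 * m (T/2)"
    using tp by simp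
  moreover have "m (T/2) > 0" using assms tp unfolding young_gen_def by simp
  moreover have "T/2 * m (T/2) > 0" using tp \<open>m (T/2) > 0\<close> by simp
  ultimately have "integral {0..T} m > 0" by linarith
  then show ?thesis unfolding youngM_def T_def by simp
qed

lemma youngM_measurable:
  assumes "young_gen m" and S: "convex_on {0..} (\<lambda>t. youngM m (sqrt t))"
    and f: "f \<in> borel_measurable N"
  shows "(\<lambda>x. youngM m (f x)) \<in> borel_measurable N"
proof -
  have mono: "mono (\<lambda>x. youngM m (max x 0))"
    by (rule monoI, rule youngM_mono[OF assms(1,2)]) auto
  have "(\<lambda>x. youngM m (max \<bar>f x\<bar> 0)) \<in> borel_measurable N"
    using measurable_compose[OF borel_measurable_abs[OF f] borel_measurable_mono[OF mono]] by simp
  moreover have "\<And>x. youngM m (max \<bar>f x\<bar> 0) = youngM m (f x)" by (simp add: youngM_abs)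
  ultimately show ?thesis by simp
qed

lemma nn_integral_cmult_le:
  fixes r :: real
  assumes "0 \<le> r"
  shows "(\<integral>\<^sup>+ x. ennreal r * f x \<partial>N) \<le> ennreal r * integral\<^sup>N N f"
proof (cases "r = 0")
  case True then show ?thesis by simp
next
  case False
  then have r: "r > 0" using assms by simp
  show ?thesis
    unfolding nn_integral_def
  proof (rule SUP_least)
    fix g assume g: "g \<in> {g. simple_function N g \<and> g \<le> (\<lambda>x. ennreal r * f x)}"
    define g' where "g' = (\<lambda>x. g x / ennreal r)"
    have sg': "simple_function N g'" using g unfolding g'_def by (auto intro: simple_function_compose1)
    have eq: "g x = ennreal r * g' x" for x
    proof -
      have "ennreal r * (g x / ennreal r) = (g x * ennreal r) / ennreal r"
        by (simp add: ennreal_times_divide mult.commute)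
      also have "\<dots> = g x" using r by (intro mult_divide_eq_ennreal) auto
      finally show ?thesis unfolding g'_def by simp
    qed
    have le: "g' \<le> f"
    proof (rule le_funI)
      fix x
      have "g x \<le> ennreal r * f x" using g by (auto simp: le_fun_def)
      then have "ennreal r * g' x \<le> ennreal r * f x" using eq[of x] by simp
      then show "g' x \<le> f x" using r
        using ennreal_mult_le_mult_iff[of "ennreal r" "g' x" "f x"] by simp
    qed
    have "integral\<^sup>S N g = ennreal r * integral\<^sup>S N g'"
      using sg' by (simp add: eq[abs_def])
    also have "\<dots> \<le> ennreal r * (SUP g\<in>{g. simple_function N g \<and> g \<le> f}. integral\<^sup>S N g)"
      by (intro mult_left_mono SUP_upper) (use sg' le in auto)
    finally show "integral\<^sup>S N g \<le> ennreal r * (SUP g\<in>{g. simple_function N g \<and> g \<le> f}. integral\<^sup>S N g)" .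
  qed
qed



lemma ball_measure_pos: "0 < r \<Longrightarrow> 0 < measure lebesgue (ball (z::'a::euclidean_space) r)"
  by simp

lemma far_ball:
  fixes x y b :: "'a::euclidean_space"
  assumes "0 < r" "norm x < r" "dist ((10*r) *\<^sub>R b) y < r" "b \<in> Basis"
  shows "8*r < dist x y \<and> dist x y \<le> 12 * r \<and> r < norm y"
proof -
  have nz: "norm ((10*r) *\<^sub>R b) = 10 * r" using assms by simp
  have "norm y \<ge> norm ((10*r) *\<^sub>R b) - dist ((10*r) *\<^sub>R b) y"
    by (metis dist_norm norm_triangle_ineq2 diff_le_eq add.commute norm_minus_commute)
  moreover have "norm y \<le> norm ((10*r) *\<^sub>R b) + dist ((10*r) *\<^sub>R b) y"
    by (metis dist_commute dist_norm norm_triangle_sub add.commute)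
  moreover have "dist x y \<ge> norm y - norm x"
    by (metis dist_norm norm_minus_commute norm_triangle_ineq2)
  moreover have "dist x y \<le> norm x + norm y"
    by (simp add: dist_norm norm_triangle_ineq4)
  ultimately show ?thesis using assms nz by linarith
qed

lemma fmod_lower:
  fixes \<Omega> :: "'a::euclidean_space set" and u :: "'a \<Rightarrow> real" and b :: 'a
  assumes young: "young_gen m" and S: "convex_on {0..} (\<lambda>t. youngM m (sqrt t))"
    and r: "0 < r" "\<Omega> \<subseteq> ball 0 r" and b: "b \<in> Basis" and s: "0 < s"
    and ae: "AE y in lebesgue. y \<notin> \<Omega> \<longrightarrow> u y = 0"
  shows "(\<integral>\<^sup>+ x. ennreal (measure lebesgue (ball ((10*r) *\<^sub>R b) r) / (12*r) powr real DIM('a)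
            * (indicator \<Omega> x * youngM m (u x / (12*r) powr s))) \<partial>lebesgue) \<le> fmodM s (youngM m) u"
  unfolding fmodM_def
proof (rule nn_integral_mono)
  fix x :: 'a
  define Y where "Y = ball ((10*r) *\<^sub>R b) r"
  define D where "D = 12 * r"
  define K where "K = D powr s"
  define c where "c = youngM m (u x / K) / D powr real DIM('a)"
  have Dpos: "D > 0" using r by (simp add: D_def)
  have Kpos: "K > 0" using Dpos by (simp add: K_def)
  show "ennreal (measure lebesgue (ball ((10*r) *\<^sub>R b) r) / (12*r) powr real DIM('a)
            * (indicator \<Omega> x * youngM m (u x / (12*r) powr s)))
        \<le> (\<integral>\<^sup>+ y. ennreal (youngM m ((u x - u y) / dist x y powr s) / dist x y powr real DIM('a)) \<partial>lebesgue)"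
  proof (cases "x \<in> \<Omega>")
    case False then show ?thesis by simp
  next
    case True
    have nx: "norm x < r" using True r by auto
    have "(\<integral>\<^sup>+ y. ennreal c * indicator Y y \<partial>lebesgue)
        \<le> (\<integral>\<^sup>+ y. ennreal (youngM m ((u x - u y) / dist x y powr s) / dist x y powr real DIM('a)) \<partial>lebesgue)"
    proof (rule nn_integral_mono_AE)
      show "AE y in lebesgue. ennreal c * indicator Y y
          \<le> ennreal (youngM m ((u x - u y) / dist x y powr s) / dist x y powr real DIM('a))"
        using ae
      proof eventually_elim
        case (elim y)
        show ?case
        proof (cases "y \<in> Y")
          case False then show ?thesis by simp
        next
          case True
          have fb: "8*r < dist x y \<and> dist x y \<le> 12 * r \<and> r < norm y"
            using far_ball[OF r(1) nx _ b, of y] True by (simp add: Y_def)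
          then have "y \<notin> \<Omega>" using r(2) by auto
          then have uy: "u y = 0" using elim by simp
          have dpos: "dist x y > 0" using fb r by linarith
          have dle: "dist x y \<le> D" using fb by (simp add: D_def)
          have dsK: "dist x y powr s \<le> K" unfolding K_def using dle dpos s by (intro powr_mono2) auto
          have dsp: "dist x y powr s > 0" using dpos by simp
          have "\<bar>u x / K\<bar> \<le> \<bar>u x / dist x y powr s\<bar>"
            using dsK dsp Kpos by (simp add: abs_div frac_le)
          then have M1: "youngM m (u x / K) \<le> youngM m (u x / dist x y powr s)"
            by (rule youngM_mono[OF young S])
          have dN: "dist x y powr real DIM('a) \<le> D powr real DIM('a)"
            using dle dpos by (intro powr_mono2) auto
          have "c \<le> youngM m (u x / dist x y powr s) / dist x y powr real DIM('a)"
            unfolding c_def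
            by (rule frac_le) (use M1 dN dpos youngM_nonneg[OF young] in auto)
          then show ?thesis using True uy by (simp add: ennreal_leI)
        qed
      qed
    qed
    moreover have "(\<integral>\<^sup>+ y. ennreal c * indicator Y y \<partial>lebesgue) = ennreal c * emeasure lebesgue Y"
      by (rule nn_integral_cmult_indicator) (simp add: Y_def)
    moreover have "emeasure lebesgue Y = ennreal (measure lebesgue Y)"
      unfolding Y_def by (rule emeasure_eq_measure2) simp
    moreover have "ennreal c * ennreal (measure lebesgue Y)
       = ennreal (measure lebesgue (ball ((10*r) *\<^sub>R b) r) / (12*r) powr real DIM('a)
            * (indicator \<Omega> x * youngM m (u x / (12*r) powr s)))"
    proof -
      have c0: "0 \<le> c" unfolding c_def using youngM_nonneg[OF young] by simp
      have "ennreal c * ennreal (measure lebesgue Y) = ennreal (c * measure lebesgue Y)"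
        using c0 by (simp add: ennreal_mult)
      also have "c * measure lebesgue Y = measure lebesgue (ball ((10*r) *\<^sub>R b) r) / (12*r) powr real DIM('a)
            * (indicator \<Omega> x * youngM m (u x / (12*r) powr s))"
        using True by (simp add: c_def Y_def D_def K_def)
      finally show ?thesis .
    qed
    ultimately show ?thesis by simp
  qed
qed



lemma fmod_scale:
  assumes young: "young_gen m" and S: "convex_on {0..} (\<lambda>t. youngM m (sqrt t))" and L: "1 \<le> L"
  shows "fmodM s (youngM m) (\<lambda>x. u x / L) \<le> ennreal (1/L) * fmodM s (youngM m) u"
  unfolding fmodM_def
proof -
  let ?F = "\<lambda>x y. ennreal (youngM m ((u x - u y) / dist x y powr s) / dist x y powr real DIM('a))"
  have pt: "ennreal (youngM m ((u x / L - u y / L) / dist x y powr s) / dist x y powr real DIM('a))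
        \<le> ennreal (1/L) * ?F x y" for x y
  proof -
    have eq: "(u x / L - u y / L) / dist x y powr s = (1/L) * ((u x - u y) / dist x y powr s)"
      by (cases "dist x y powr s = 0") (use L in \<open>auto simp: field_simps\<close>)
    have "youngM m ((u x / L - u y / L) / dist x y powr s) \<le> (1/L) * youngM m ((u x - u y) / dist x y powr s)"
      unfolding eq by (rule youngM_scale[OF young S]) (use L in auto)
    then have "youngM m ((u x / L - u y / L) / dist x y powr s) / dist x y powr real DIM('a)
        \<le> (1/L) * youngM m ((u x - u y) / dist x y powr s) / dist x y powr real DIM('a)"
      by (rule divide_right_mono) simp
    then show ?thesis using L youngM_nonneg[OF young]
      by (simp add: ennreal_mult[symmetric] ennreal_leI)
  qed
  have "(\<integral>\<^sup>+ x. \<integral>\<^sup>+ y. ennreal (youngM m ((u x / L - u y / L) / dist x y powr s) / dist x y powr real DIM('a)) \<partial>lebesgue \<partial>lebesgue)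
      \<le> (\<integral>\<^sup>+ x. ennreal (1/L) * (\<integral>\<^sup>+ y. ?F x y \<partial>lebesgue) \<partial>lebesgue)"
  proof (rule nn_integral_mono)
    fix x
    have "(\<integral>\<^sup>+ y. ennreal (youngM m ((u x / L - u y / L) / dist x y powr s) / dist x y powr real DIM('a)) \<partial>lebesgue)
        \<le> (\<integral>\<^sup>+ y. ennreal (1/L) * ?F x y \<partial>lebesgue)"
      by (rule nn_integral_mono) (rule pt)
    also have "\<dots> \<le> ennreal (1/L) * (\<integral>\<^sup>+ y. ?F x y \<partial>lebesgue)"
      by (rule nn_integral_cmult_le) (use L in simp)
    finally show "(\<integral>\<^sup>+ y. ennreal (youngM m ((u x / L - u y / L) / dist x y powr s) / dist x y powr real DIM('a)) \<partial>lebesgue)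
        \<le> ennreal (1/L) * (\<integral>\<^sup>+ y. ?F x y \<partial>lebesgue)" .
  qed
  also have "\<dots> \<le> ennreal (1/L) * (\<integral>\<^sup>+ x. \<integral>\<^sup>+ y. ?F x y \<partial>lebesgue \<partial>lebesgue)"
    by (rule nn_integral_cmult_le) (use L in simp)
  finally show "(\<integral>\<^sup>+ x. \<integral>\<^sup>+ y. ennreal (youngM m ((u x / L - u y / L) / dist x y powr s) / dist x y powr real DIM('a)) \<partial>lebesgue \<partial>lebesgue)
      \<le> ennreal (1/L) * (\<integral>\<^sup>+ x. \<integral>\<^sup>+ y. ?F x y \<partial>lebesgue \<partial>lebesgue)" .
qed

lemma seminorm_bound:
  fixes u :: "'a::euclidean_space \<Rightarrow> real"
  assumes young: "young_gen m" and S: "convex_on {0..} (\<lambda>t. youngM m (sqrt t))"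
    and phi: "fmodM s (youngM m) u = ennreal \<phi>" "0 \<le> \<phi>" and L: "1 \<le> L" "\<phi> \<le> L"
  shows "frac_seminorm s (youngM m) u \<le> L"
  unfolding frac_seminorm_def
proof (rule cInf_lower)
  have "fmodM s (youngM m) (\<lambda>x. u x / L) \<le> ennreal (1/L) * ennreal \<phi>"
    using fmod_scale[OF young S L(1), of s u] phi by simp
  also have "\<dots> = ennreal (\<phi> / L)" using L phi by (simp add: ennreal_mult[symmetric])
  also have "\<dots> \<le> 1" using L phi by simp
  finally show "L \<in> {l. 0 < l \<and> fmodM s (youngM m) (\<lambda>x. u x / l) \<le> 1}" using L by simp
  show "bdd_below {l. 0 < l \<and> fmodM s (youngM m) (\<lambda>x. u x / l) \<le> 1}"
    by (rule bdd_belowI[of _ 0]) auto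
qed

lemma q_bound:
  assumes young: "young_gen m" and S: "convex_on {0..} (\<lambda>t. youngM m (sqrt t))"
    and Q: "((\<lambda>t. \<bar>t\<bar> powr q / youngM m t) \<longlongrightarrow> 0) at_top"
    and q: "0 < q" and d: "0 < \<delta>" and K: "0 < K"
  shows "\<exists>T0>0. \<forall>t. \<bar>t\<bar> powr q \<le> (K*T0) powr q + K powr q * \<delta> * youngM m (t/K)"
proof -
  have "eventually (\<lambda>t. \<bar>t\<bar> powr q / youngM m t < \<delta>) at_top"
    using order_tendstoD(2)[OF Q d] .
  then obtain N where N: "\<And>t. t \<ge> N \<Longrightarrow> \<bar>t\<bar> powr q / youngM m t < \<delta>"
    by (auto simp: eventually_at_top_linorder)
  define T0 where "T0 = max N 1"
  have T0: "T0 > 0" by (simp add: T0_def)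
  have "\<bar>t\<bar> powr q \<le> (K*T0) powr q + K powr q * \<delta> * youngM m (t/K)" for t
  proof (cases "\<bar>t\<bar> \<ge> K * T0")
    case True
    define w where "w = \<bar>t\<bar> / K"
    have wT: "w \<ge> T0" using True K unfolding w_def by (simp add: field_simps)
    then have wpos: "w > 0" using T0 by simp
    have Mw: "youngM m w > 0" using youngM_pos[OF young] wpos by simp
    have "w powr q / youngM m w < \<delta>" using N[of w] wT wpos by (simp add: T0_def)
    then have wq: "w powr q < \<delta> * youngM m w" using Mw by (simp add: divide_less_eq)
    have tw: "\<bar>t\<bar> = K * w" using K by (simp add: w_def)
    have "w = \<bar>t/K\<bar>" using K by (simp add: w_def abs_div)
    then have Mt: "youngM m (t/K) = youngM m w" using youngM_abs[of m "t/K"] by simp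
    have "\<bar>t\<bar> powr q = K powr q * w powr q" using K wpos by (simp add: tw powr_mult)
    also have "\<dots> \<le> K powr q * (\<delta> * youngM m w)" using wq K by (intro mult_left_mono) auto
    also have "\<dots> = K powr q * \<delta> * youngM m (t/K)" by (simp add: Mt)
    moreover have "0 \<le> (K*T0) powr q" by simp
    ultimately show ?thesis by linarith
  next
    case False
    have "\<bar>t\<bar> powr q \<le> (K*T0) powr q" using False q by (intro powr_mono2) auto
    moreover have "0 \<le> K powr q * \<delta> * youngM m (t/K)" using d youngM_nonneg[OF young] by simp
    ultimately show ?thesis by linarith
  qed
  then show ?thesis using T0 by blast
qed



lemma nn_split:
  assumes "\<Omega> \<in> sets lebesgue" "f \<in> borel_measurable lebesgue" "\<And>x. 0 \<le> f x" "0 \<le> \<alpha>" "0 \<le> \<beta>"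
  shows "(\<integral>\<^sup>+ x. ennreal (\<alpha> * indicator \<Omega> x + \<beta> * f x) \<partial>lebesgue)
     = ennreal \<alpha> * emeasure lebesgue \<Omega> + ennreal \<beta> * (\<integral>\<^sup>+ x. ennreal (f x) \<partial>lebesgue)"
proof -
  have "(\<integral>\<^sup>+ x. ennreal (\<alpha> * indicator \<Omega> x + \<beta> * f x) \<partial>lebesgue)
      = (\<integral>\<^sup>+ x. ennreal \<alpha> * indicator \<Omega> x + ennreal \<beta> * ennreal (f x) \<partial>lebesgue)"
    by (rule nn_integral_cong) (use assms in \<open>auto simp: ennreal_plus ennreal_mult indicator_def\<close>)
  also have "\<dots> = (\<integral>\<^sup>+ x. ennreal \<alpha> * indicator \<Omega> x \<partial>lebesgue) + (\<integral>\<^sup>+ x. ennreal \<beta> * ennreal (f x) \<partial>lebesgue)"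
    by (rule nn_integral_add) (use assms in auto)
  also have "\<dots> = ennreal \<alpha> * emeasure lebesgue \<Omega> + ennreal \<beta> * (\<integral>\<^sup>+ x. ennreal (f x) \<partial>lebesgue)"
    using assms by (simp add: nn_integral_cmult_indicator nn_integral_cmult)
  finally show ?thesis .
qed

theorem proposition4p2:
  fixes \<Omega> :: "'a::euclidean_space set"
    and m :: "real \<Rightarrow> real" and g :: "'a \<Rightarrow> real \<Rightarrow> real"
    and s p q C0 C1 C2 lam :: real
  assumes dom: "smooth_bounded_domain \<Omega>"
    and s: "0 < s" "s < 1"
    and young: "young_gen m"
    and m0: "1 < Inf ((\<lambda>t. t * m t / youngM m t) ` {0<..})"
    and m0': "bdd_above ((\<lambda>t. t * m t / youngM m t) ` {0<..})"
    and S: "convex_on {0..} (\<lambda>t. youngM m (sqrt t))"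
    and p: "1 < p" "p < real DIM('a)"
    and q: "1 < q" "q < real DIM('a) * p / (real DIM('a) - p)"
           "q < Inf ((\<lambda>t. t * m t / youngM m t) ` {0<..})"
    and Q: "((\<lambda>t. \<bar>t\<bar> powr q / youngM m t) \<longlongrightarrow> 0) at_top"
    and g_meas: "\<And>t. (\<lambda>x. g x t) \<in> borel_measurable (lebesgue_on \<Omega>)"
    and g_cont: "AE x in lebesgue_on \<Omega>. continuous_on UNIV (g x)"
    and C: "C0 > 0" "C1 > 0" "C2 > 0"
    and A: "\<And>x t. x \<in> \<Omega> \<Longrightarrow> \<bar>g x t\<bar> \<le> C0 * \<bar>t\<bar> powr (q - 1)"
    and B: "\<And>x t. x \<in> \<Omega> \<Longrightarrow> C1 * \<bar>t\<bar> powr q \<le> primitive g x t"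
           "\<And>x t. x \<in> \<Omega> \<Longrightarrow> primitive g x t \<le> C2 * \<bar>t\<bar> powr q"
    and lam: "lam > 0"
  shows "\<forall>K. \<exists>R. \<forall>u \<in> W0tilde s (youngM m) \<Omega>.
            frac_seminorm s (youngM m) u \<ge> R \<longrightarrow> I_functional s (youngM m) \<Omega> g lam u \<ge> K"
proof -
  have bO: "bounded \<Omega>" and oO: "open \<Omega>" using dom by (auto simp: smooth_bounded_domain_def)
  obtain r where r: "0 < r" "\<Omega> \<subseteq> ball 0 r" using bounded_subset_ballD[OF bO, of 0] by blast
  obtain b :: 'a where b: "b \<in> Basis" using nonempty_Basis by blast
  have Olm: "\<Omega> \<in> lmeasurable" using bO oO by (rule lmeasurable_open)
  then have Omeas: "\<Omega> \<in> sets lebesgue" by (rule fmeasurableD)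
  define mO where "mO = measure lebesgue \<Omega>"
  have emO: "emeasure lebesgue \<Omega> = ennreal mO" unfolding mO_def using Olm by (rule emeasure_eq_measure2)
  have mOnn: "0 \<le> mO" by (simp add: mO_def)
  define K where "K = (12*r) powr s"
  have Kpos: "K > 0" using r by (simp add: K_def)
  define c0 where "c0 = measure lebesgue (ball ((10*r) *\<^sub>R b) r) / (12*r) powr real DIM('a)"
  have c0pos: "c0 > 0" unfolding c0_def using r by (simp add: ball_measure_pos)
  define \<delta> where "\<delta> = c0 / (2 * lam * C2 * K powr q)"
  have dpos: "\<delta> > 0" using c0pos lam C Kpos by (simp add: \<delta>_def)
  obtain T0 where T0: "T0 > 0" "\<And>t. \<bar>t\<bar> powr q \<le> (K*T0) powr q + K powr q * \<delta> * youngM m (t/K)"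
    using q_bound[OF young S Q _ dpos Kpos] q by auto
  define \<alpha> where "\<alpha> = C2 * (K*T0) powr q"
  define \<beta> where "\<beta> = C2 * K powr q * \<delta>"
  have anm: "0 \<le> \<alpha>" "0 \<le> \<beta>" using C dpos by (auto simp: \<alpha>_def \<beta>_def)
  have lb: "lam * \<beta> = c0 / 2" using lam C Kpos c0pos by (simp add: \<beta>_def \<delta>_def field_simps)
  define C3 where "C3 = lam * \<alpha> * mO"
  show ?thesis
  proof
    fix Kt :: real
    define R where "R = max 2 (2 * (Kt + C3))"
    show "\<exists>R. \<forall>u \<in> W0tilde s (youngM m) \<Omega>.
            frac_seminorm s (youngM m) u \<ge> R \<longrightarrow> I_functional s (youngM m) \<Omega> g lam u \<ge> Kt"
    proof (intro exI ballI impI)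
      fix u assume uW: "u \<in> W0tilde s (youngM m) \<Omega>" and uR: "frac_seminorm s (youngM m) u \<ge> R"
      have um: "u \<in> borel_measurable lebesgue" and fin: "fmodM s (youngM m) u < \<infinity>"
        and ae: "AE x in lebesgue. x \<notin> \<Omega> \<longrightarrow> u x = 0"
        using uW by (auto simp: W0tilde_def W0space_def Wspace_def orlicz_space_def)
      obtain \<phi> where phi: "fmodM s (youngM m) u = ennreal \<phi>" "0 \<le> \<phi>"
        using fin by (cases "fmodM s (youngM m) u") auto
      have phiR: "\<phi> \<ge> R"
      proof (rule ccontr)
        assume "\<not> R \<le> \<phi>"
        moreover have "2 \<le> R" unfolding R_def by simp
        ultimately have "max \<phi> 1 < R" by simp
        moreover have "frac_seminorm s (youngM m) u \<le> max \<phi> 1"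
          by (rule seminorm_bound[OF young S phi]) auto
        ultimately show False using uR by linarith
      qed
      have Mm: "(\<lambda>x. youngM m (u x / K)) \<in> borel_measurable lebesgue"
        by (rule youngM_measurable[OF young S]) (use um in measurable)
      define f where "f = (\<lambda>x. indicator \<Omega> x * youngM m (u x / K))"
      have fm: "f \<in> borel_measurable lebesgue" unfolding f_def
        by (intro borel_measurable_times borel_measurable_indicator Mm Omeas)
      have fnn: "\<And>x. 0 \<le> f x" unfolding f_def using youngM_nonneg[OF young] by simp
      have "(\<integral>\<^sup>+ x. ennreal (c0 * f x) \<partial>lebesgue) \<le> fmodM s (youngM m) u"
        using fmod_lower[OF young S r b s(1) ae] by (simp add: f_def c0_def K_def)
      moreover have "(\<integral>\<^sup>+ x. ennreal (c0 * f x) \<partial>lebesgue) = ennreal c0 * (\<integral>\<^sup>+ x. ennreal (f x) \<partial>lebesgue)"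
      proof -
        have "(\<integral>\<^sup>+ x. ennreal (c0 * f x) \<partial>lebesgue) = (\<integral>\<^sup>+ x. ennreal c0 * ennreal (f x) \<partial>lebesgue)"
          by (rule nn_integral_cong) (use c0pos fnn in \<open>simp add: ennreal_mult\<close>)
        also have "\<dots> = ennreal c0 * (\<integral>\<^sup>+ x. ennreal (f x) \<partial>lebesgue)"
          by (rule nn_integral_cmult) (rule measurable_compose[OF fm measurable_ennreal])
        finally show ?thesis .
      qed
      ultimately have cA: "ennreal c0 * (\<integral>\<^sup>+ x. ennreal (f x) \<partial>lebesgue) \<le> ennreal \<phi>" using phi by simp
      have "(\<integral>\<^sup>+ x. ennreal (f x) \<partial>lebesgue) \<noteq> \<infinity>"
      proof
        assume inf: "(\<integral>\<^sup>+ x. ennreal (f x) \<partial>lebesgue) = \<infinity>"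
        have "ennreal c0 \<noteq> 0" using c0pos by simp
        then have "ennreal c0 * (\<integral>\<^sup>+ x. ennreal (f x) \<partial>lebesgue) = \<infinity>"
          unfolding inf using ennreal_top_mult_left[of "ennreal c0"] by simp
        then have il: "\<infinity> \<le> ennreal \<phi>" using cA by simp
        have lt: "ennreal \<phi> < \<infinity>" by simp
        show False using leD[OF il] lt by blast
      qed
      then obtain a where a: "(\<integral>\<^sup>+ x. ennreal (f x) \<partial>lebesgue) = ennreal a" "0 \<le> a"
        by (cases "(\<integral>\<^sup>+ x. ennreal (f x) \<partial>lebesgue)") auto
      have c0a: "c0 * a \<le> \<phi>" using cA a c0pos phi by (simp add: ennreal_mult[symmetric])
      define h where "h = (\<lambda>x. indicator \<Omega> x *\<^sub>R primitive g x (u x))"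
      have hnn: "\<And>x. 0 \<le> h x"
      proof -
        fix x show "0 \<le> h x"
        proof (cases "x \<in> \<Omega>")
          case True
          have "0 \<le> C1 * \<bar>u x\<bar> powr q" using C by simp
          then show ?thesis using B(1)[OF True, of "u x"] True by (simp add: h_def)
        qed (simp add: h_def)
      qed
      have "(\<integral>\<^sup>+ x. ennreal (h x) \<partial>lebesgue) \<le> (\<integral>\<^sup>+ x. ennreal (\<alpha> * indicator \<Omega> x + \<beta> * f x) \<partial>lebesgue)"
      proof (rule nn_integral_mono)
        fix x show "ennreal (h x) \<le> ennreal (\<alpha> * indicator \<Omega> x + \<beta> * f x)"
        proof (cases "x \<in> \<Omega>")
          case True
          have "h x \<le> C2 * \<bar>u x\<bar> powr q" using B(2)[OF True, of "u x"] True by (simp add: h_def)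
          also have "\<dots> \<le> C2 * ((K*T0) powr q + K powr q * \<delta> * youngM m (u x/K))"
            using T0(2)[of "u x"] C by (intro mult_left_mono) auto
          also have "\<dots> = \<alpha> * indicator \<Omega> x + \<beta> * f x"
            using True by (simp add: \<alpha>_def \<beta>_def f_def algebra_simps)
          finally show ?thesis by (rule ennreal_leI)
        next
          case False then show ?thesis by (simp add: h_def f_def)
        qed
      qed
      also have "\<dots> = ennreal \<alpha> * emeasure lebesgue \<Omega> + ennreal \<beta> * (\<integral>\<^sup>+ x. ennreal (f x) \<partial>lebesgue)"
        by (rule nn_split[OF Omeas fm fnn anm])
      also have "\<dots> = ennreal (\<alpha> * mO + \<beta> * a)"
        using anm a mOnn by (simp add: emO ennreal_mult ennreal_plus)
      finally have hb: "(\<integral>\<^sup>+ x. ennreal (h x) \<partial>lebesgue) \<le> ennreal (\<alpha> * mO + \<beta> * a)" .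
      have Lb: "(LINT x:\<Omega>|lebesgue. primitive g x (u x)) \<le> \<alpha> * mO + \<beta> * a"
      proof (cases "integrable lebesgue h")
        case True
        have "ennreal (integral\<^sup>L lebesgue h) = (\<integral>\<^sup>+ x. ennreal (h x) \<partial>lebesgue)"
          using nn_integral_eq_integral[OF True] hnn by simp
        then have "ennreal (integral\<^sup>L lebesgue h) \<le> ennreal (\<alpha> * mO + \<beta> * a)" using hb by simp
        moreover have "0 \<le> \<alpha> * mO + \<beta> * a" using anm a mOnn by simp
        ultimately have "integral\<^sup>L lebesgue h \<le> \<alpha> * mO + \<beta> * a"
          using ennreal_le_iff by blast
        then show ?thesis by (simp add: set_lebesgue_integral_def h_def)
      next
        case False
        then have "integral\<^sup>L lebesgue h = 0" by (rule not_integrable_integral_eq)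
        then show ?thesis using anm a mOnn by (simp add: set_lebesgue_integral_def h_def)
      qed
      have I: "I_functional s (youngM m) \<Omega> g lam u = \<phi> - lam * (LINT x:\<Omega>|lebesgue. primitive g x (u x))"
        using phi by (simp add: I_functional_def)
      have "lam * (LINT x:\<Omega>|lebesgue. primitive g x (u x)) \<le> lam * (\<alpha> * mO + \<beta> * a)"
        using Lb lam by simp
      also have "\<dots> = C3 + (lam * \<beta>) * a" by (simp add: C3_def algebra_simps)
      also have "\<dots> = C3 + c0 * a / 2" by (simp add: lb)
      finally have "lam * (LINT x:\<Omega>|lebesgue. primitive g x (u x)) \<le> C3 + \<phi> / 2" using c0a by linarith
      then show "I_functional s (youngM m) \<Omega> g lam u \<ge> Kt"
        using I phiR by (simp add: R_def)
    qed
  qed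
qed

end
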